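(* Let $r\ge 1$ and $n\ge 3r+6$ be integers. Then $\rho(K_{3,n-3})>\rho(H'_{n,r})$.
   Context: $\rho$ denotes the spectral radius (largest adjacency eigenvalue). $K_1\vee rK_3$ is the join of a single vertex with $r$ disjoint triangles; let $u$ be its vertex of degree $3r$ (any vertex if $r=1$). In $K_{3,n-3r-3}$ (complete bipartite with parts of sizes $3$ and $n-3r-3$), let $vw$ be an edge where $v$ has degree $n-3r-3$ and $w$ has degree $3$. $H'_{n,r}$ is the graph obtained from the disjoint union of $K_1\vee rK_3$ and $K_{3,n-3r-3}$ by identifying $u$ with $w$. *)

theory Defs
  imports "Jordan_Normal_Form.Char_Poly"
begin

text \<open>Simple graphs on vertex set {0..<n}, given by a symmetric irreflexive edge predicate.\<close>

definition adj_mat :: "nat \<Rightarrow> (nat \<Rightarrow> nat \<Rightarrow> bool) \<Rightarrow> real mat" where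
  "adj_mat n E = mat n n (\<lambda>(i,j). if E i j then 1 else 0)"

definition spec_rad :: "nat \<Rightarrow> (nat \<Rightarrow> nat \<Rightarrow> bool) \<Rightarrow> real" where
  "spec_rad n E = Max {k. eigenvalue (adj_mat n E) k}"

definition K3_edges :: "nat \<Rightarrow> nat \<Rightarrow> bool" where
  "K3_edges i j = ((i < 3 \<and> 3 \<le> j) \<or> (j < 3 \<and> 3 \<le> i))"

text \<open>H'_{n,r} on {0..<n}: vertex 0 is u = w; triangles {3k+1,3k+2,3k+3} (k<r);
  the part of size 3 of K_{3,n-3r-3} is {3r+1,3r+2,3r+3}; the other part is {0} \<union> {3r+4..<n}.\<close>
definition H'_edges :: "nat \<Rightarrow> nat \<Rightarrow> nat \<Rightarrow> bool" where
  "H'_edges r i j =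
     ((1 \<le> i \<and> i \<le> 3*r \<and> 1 \<le> j \<and> j \<le> 3*r \<and> i \<noteq> j \<and> (i - 1) div 3 = (j - 1) div 3)
      \<or> (i = 0 \<and> 1 \<le> j \<and> j \<le> 3*r) \<or> (j = 0 \<and> 1 \<le> i \<and> i \<le> 3*r)
      \<or> (3*r+1 \<le> i \<and> i \<le> 3*r+3 \<and> (j = 0 \<or> 3*r+4 \<le> j))
      \<or> (3*r+1 \<le> j \<and> j \<le> 3*r+3 \<and> (i = 0 \<or> 3*r+4 \<le> i)))"

end

theory Submission
  imports Defs "Jordan_Normal_Form.Spectral_Radius"
begin

lemma adj_carrier: "adj_mat n E \<in> carrier_mat n n" by (simp add: adj_mat_def)

lemma mult_row: assumes "A \<in> carrier_mat n n" "v \<in> carrier_vec n" "i < n"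
  shows "(A *\<^sub>v v) $ i = (\<Sum>j<n. A $$ (i,j) * v $ j)"
  using assms by (auto simp: scalar_prod_def lessThan_atLeast0 intro!: sum.cong)

lemma adj_row: assumes "i < n"
  shows "(\<Sum>j<n. adj_mat n E $$ (i,j) * x j) = (\<Sum>j\<in>{j\<in>{..<n}. E i j}. x j)"
proof -
  have "(\<Sum>j<n. adj_mat n E $$ (i,j) * x j) = (\<Sum>j<n. if E i j then x j else 0)"
    using assms by (intro sum.cong) (auto simp: adj_mat_def)
  also have "\<dots> = (\<Sum>j\<in>{j\<in>{..<n}. E i j}. x j)" by (rule sum.inter_filter[symmetric]) simp
  finally show ?thesis .
qed

lemma eig_bound:
  fixes A :: "real mat"
  assumes A: "A \<in> carrier_mat n n" and nn: "\<And>i j. i<n \<Longrightarrow> j<n \<Longrightarrow> A $$ (i,j) \<ge> 0"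
  and xp: "\<And>i. i<n \<Longrightarrow> x i > 0"
  and xs: "\<And>i. i<n \<Longrightarrow> (\<Sum>j<n. A$$(i,j) * x j) < c * x i"
  and ev: "eigenvalue A k"
  shows "k < c"
proof -
  obtain v where v: "v \<in> carrier_vec n" "v \<noteq> 0\<^sub>v n" "A *\<^sub>v v = k \<cdot>\<^sub>v v"
    using ev A unfolding eigenvalue_def eigenvector_def by auto
  have eq: "(\<Sum>j<n. A $$ (i,j) * v $ j) = k * v $ i" if "i < n" for i
    using mult_row[OF A v(1) that] v(3) that v(1) by auto
  obtain i0 where i0: "i0 < n" "v $ i0 \<noteq> 0" using v(1,2) by (metis eq_vecI carrier_vecD index_zero_vec)
  define f where "f j = \<bar>v $ j\<bar> / x j" for j
  define M where "M = Max (f ` {..<n})"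
  have fin: "finite (f ` {..<n})" "f ` {..<n} \<noteq> {}" using i0 by auto
  obtain i where i: "i < n" "f i = M" using Max_in[OF fin] unfolding M_def by auto
  have fle: "f j \<le> M" if "j < n" for j unfolding M_def using fin that by auto
  have "f i0 > 0" using i0 xp unfolding f_def by auto
  hence Mpos: "M > 0" using fle[OF i0(1)] by auto
  have vi: "\<bar>v $ i\<bar> = M * x i" using i xp[of i] unfolding f_def by auto
  have vj: "\<bar>v $ j\<bar> \<le> M * x j" if "j<n" for j using fle[OF that] xp[OF that] unfolding f_def
    by (simp add: divide_le_eq mult.commute)
  have "\<bar>k\<bar> * \<bar>v $ i\<bar> = \<bar>\<Sum>j<n. A $$ (i,j) * v $ j\<bar>" using eq[OF i(1)] by (simp add: abs_mult)
  also have "\<dots> \<le> (\<Sum>j<n. \<bar>A $$ (i,j) * v $ j\<bar>)" by (rule sum_abs)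
  also have "\<dots> \<le> (\<Sum>j<n. A $$ (i,j) * (M * x j))"
    apply (rule sum_mono) using nn[OF i(1)] vj by (simp add: abs_mult mult_left_mono)
  also have "\<dots> = M * (\<Sum>j<n. A $$ (i,j) * x j)" by (simp add: sum_distrib_left algebra_simps)
  also have "\<dots> < M * (c * x i)" using xs[OF i(1)] Mpos by simp
  also have "\<dots> = c * \<bar>v $ i\<bar>" using vi by simp
  finally have "\<bar>k\<bar> * \<bar>v $ i\<bar> < c * \<bar>v $ i\<bar>" .
  hence "\<bar>k\<bar> < c" using Mpos xp[OF i(1)] vi by (metis mult_less_cancel_right abs_ge_zero not_less)
  thus ?thesis by simp
qed


lemma S0: "n \<ge> 3*r+6 \<Longrightarrow> {j\<in>{..<n}. H'_edges r 0 j} = {1..3*r} \<union> {3*r+1..3*r+3}"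
  by (auto simp: H'_edges_def)

lemma divq: "(j::nat) \<ge> 1 \<Longrightarrow> ((j-1) div 3 = q) = (3*q+1 \<le> j \<and> j \<le> 3*q+3)"
  by auto

lemma S2: assumes "n \<ge> 3*r+6" "3*r+1 \<le> i" "i \<le> 3*r+3"
  shows "{j\<in>{..<n}. H'_edges r i j} = insert 0 {3*r+4..<n}"
  using assms unfolding H'_edges_def by auto

lemma S3: assumes "n \<ge> 3*r+6" "3*r+4 \<le> i" "i < n"
  shows "{j\<in>{..<n}. H'_edges r i j} = {3*r+1..3*r+3}"
  using assms unfolding H'_edges_def by auto


lemma S1: assumes "n \<ge> 3*r+6" "1 \<le> i" "i \<le> 3*r"
  shows "{j\<in>{..<n}. H'_edges r i j} = insert 0 ({3*((i-1) div 3)+1, 3*((i-1) div 3)+2, 3*((i-1) div 3)+3} - {i})"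
proof -
  define q where "q = (i-1) div 3"
  define T where "T = {3*q+1, 3*q+2, 3*q+3}"
  have q: "3*q+1 \<le> i" "i \<le> 3*q+3" using divq[of i q] assms unfolding q_def by auto
  have "3*q < 3*r" using q assms by linarith
  hence "q < r" by simp
  hence qr: "3*q+3 \<le> 3*r" by simp
  have e: "(3*q+1\<le>j \<and> j\<le>3*q+3) \<longleftrightarrow> j \<in> T" for j unfolding T_def by auto
  have H: "H'_edges r i j \<longleftrightarrow> (j=0 \<or> (1\<le>j \<and> j\<le>3*r \<and> j\<noteq>i \<and> j \<in> T))" for j
  proof -
    have "j \<ge> 1 \<Longrightarrow> ((i - 1) div 3 = (j - 1) div 3) = (j \<in> T)"
      using divq[of j q] e unfolding q_def by metis
    thus ?thesis using assms unfolding H'_edges_def by auto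
  qed
  have T: "\<And>j. j\<in>T \<Longrightarrow> 1\<le>j \<and> j\<le>3*r \<and> j<n" using qr assms unfolding T_def by auto
  have "{j\<in>{..<n}. H'_edges r i j} = insert 0 (T - {i})"
  proof (rule Set.set_eqI)
    fix j show "j \<in> {j\<in>{..<n}. H'_edges r i j} \<longleftrightarrow> j \<in> insert 0 (T - {i})"
      unfolding H using T[of j] assms by auto
  qed
  thus ?thesis unfolding q_def[symmetric] T_def .
qed


lemma arith_facts:
  fixes L m r :: real
  assumes L: "L = sqrt (3*m+9*r)" and r: "r \<ge> 1" and m: "m \<ge> 3"
  shows "L > 3"
    "3*r*(1/(L-3)) + 3*(L/9) < L * 1"
    "1 + 2*(1/(L-3)) < L * (1/(L-3))"
    "1 + (m-1)*((m+1)/(3*m)) < L*(L/9)"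
    "3*(L/9) < L*((m+1)/(3*m))"
proof -
  have "3*m+9*r \<ge> 0" using r m by simp
  hence L2: "L^2 = 3*m+9*r" unfolding L by (rule real_sqrt_pow2)
  have L0: "L \<ge> 0" unfolding L using r m by simp
  have "3*m+9*r > 9" using r m by linarith
  then show L3: "L > 3"
  proof -
    { assume "\<not> L > 3" hence "L^2 \<le> 3^2" using L0 by (intro power_mono) auto
      hence False using L2 \<open>3*m+9*r > 9\<close> by simp }
    thus ?thesis by blast
  qed
  have "3*m + 9*r < (m+3/2*r)^2"
  proof -
    have "m*m \<ge> 3*m" using m by (simp add: mult_right_mono)
    moreover have "m*r \<ge> 3*r" using m r by (simp add: mult_right_mono)
    moreover have "r*r > 0" using r by simp
    ultimately show ?thesis by (simp add: power2_eq_square algebra_simps)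
  qed
  hence Lb: "L < m + 3/2*r"
  proof -
    assume h: "3*m + 9*r < (m+3/2*r)^2"
    { assume "\<not> L < m + 3/2*r" hence "(m+3/2*r)^2 \<le> L^2" using r m by (intro power_mono) auto
      hence False using L2 h by simp }
    thus ?thesis by blast
  qed
  have "3*r < 2/3*L*(L-3)" using L2 Lb by (simp add: algebra_simps power2_eq_square)
  hence "3*r/(L-3) < 2/3*L" using L3 by (simp add: divide_simps mult.commute)
  then show "3*r*(1/(L-3)) + 3*(L/9) < L * 1" by simp
  show "1 + 2*(1/(L-3)) < L * (1/(L-3))" using L3 by (simp add: divide_simps)
  have "1 + (m-1)*((m+1)/(3*m)) = 1 + m/3 - 1/(3*m)" using m by (simp add: field_simps)
  also have "\<dots> < m/3 + r"
  proof -
    have "1/(3*m) > 0" using m by simp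
    thus ?thesis using r by linarith
  qed
  also have "\<dots> = L*(L/9)" using L2 by (simp add: power2_eq_square field_simps)
  finally show "1 + (m-1)*((m+1)/(3*m)) < L*(L/9)" .
  have "1 < (m+1)/m" using m by (simp add: divide_simps)
  hence "L/3 * 1 < L/3 * ((m+1)/m)" using L3 by (intro mult_strict_left_mono) auto
  thus "3*(L/9) < L*((m+1)/(3*m))" by simp
qed


lemma K3_eig: assumes n: "n \<ge> 4"
  shows "eigenvalue (adj_mat n K3_edges) (sqrt (3*(real n - 3)))"
proof -
  define L where "L = sqrt (3*(real n - 3))"
  have L2: "L*L = 3*(real n - 3)" unfolding L_def using n by simp
  define xk where "xk j = (if j < 3 then L/3 else 1)" for j :: nat
  define v where "v = vec n xk"
  have A: "adj_mat n K3_edges \<in> carrier_mat n n" by (rule adj_carrier)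
  have vc: "v \<in> carrier_vec n" unfolding v_def by simp
  have "v $ 3 = 1" unfolding v_def xk_def using n by simp
  moreover have "(0\<^sub>v n :: real vec) $ 3 = 0" using n by simp
  ultimately have vnz: "v \<noteq> 0\<^sub>v n" by auto
  have "adj_mat n K3_edges *\<^sub>v v = L \<cdot>\<^sub>v v"
  proof (rule eq_vecI)
    fix i assume i: "i < dim_vec (L \<cdot>\<^sub>v v)"
    hence i: "i < n" using vc by simp
    have "(adj_mat n K3_edges *\<^sub>v v) $ i = (\<Sum>j<n. adj_mat n K3_edges $$ (i,j) * xk j)"
      unfolding mult_row[OF A vc i] by (rule sum.cong) (auto simp: v_def)
    also have "\<dots> = (\<Sum>j\<in>{j\<in>{..<n}. K3_edges i j}. xk j)" by (rule adj_row[OF i])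
    also have "\<dots> = L * xk i"
    proof (cases "i < 3")
      case True
      have "{j\<in>{..<n}. K3_edges i j} = {3..<n}" using True unfolding K3_edges_def by auto
      moreover have "(\<Sum>j\<in>{3..<n}. xk j) = (\<Sum>j\<in>{3..<n}. 1)" by (rule sum.cong) (auto simp: xk_def)
      ultimately show ?thesis using True n L2 by (simp add: xk_def of_nat_diff)
    next
      case False
      have "{j\<in>{..<n}. K3_edges i j} = {0,1,2}" using False n unfolding K3_edges_def by auto
      thus ?thesis using False by (simp add: xk_def)
    qed
    also have "\<dots> = (L \<cdot>\<^sub>v v) $ i" using i by (simp add: v_def)
    finally show "(adj_mat n K3_edges *\<^sub>v v) $ i = (L \<cdot>\<^sub>v v) $ i" .
  qed (use A vc in simp)
  thus ?thesis unfolding L_def[symmetric] eigenvalue_def eigenvector_def using vc vnz A by auto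
qed


lemma H_bound: assumes r: "r \<ge> 1" and n: "n \<ge> 3*r+6"
  and ev: "eigenvalue (adj_mat n (H'_edges r)) k"
  shows "k < sqrt (3*(real n - 3))"
proof -
  define m where "m = real n - 3*r - 3"
  define L where "L = sqrt (3*(real n - 3))"
  have m3: "m \<ge> 3" unfolding m_def using n by linarith
  have r1: "real r \<ge> 1" using r by simp
  have LL: "L = sqrt (3*m + 9*real r)" unfolding L_def m_def by (simp add: algebra_simps)
  note ar = arith_facts[OF LL r1 m3]
  define a where "a = 1/(L-3)"
  define c where "c = L/9"
  define d where "d = (m+1)/(3*m)"
  define x where "x j = (if j = 0 then 1 else if j \<le> 3*r then a else if j \<le> 3*r+3 then c else d)" for j :: nat
  have apos: "a > 0" unfolding a_def using ar(1) by simp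
  have cpos: "c > 0" unfolding c_def using ar(1) by simp
  have dpos: "d > 0" unfolding d_def using m3 by simp
  have A: "adj_mat n (H'_edges r) \<in> carrier_mat n n" by (rule adj_carrier)
  show ?thesis unfolding L_def[symmetric]
  proof (rule eig_bound[OF A _ _ _ ev])
    show "\<And>i j. i<n \<Longrightarrow> j<n \<Longrightarrow> adj_mat n (H'_edges r) $$ (i,j) \<ge> 0" by (simp add: adj_mat_def)
    show "\<And>i. i<n \<Longrightarrow> x i > 0" using apos cpos dpos by (simp add: x_def)
    fix i assume i: "i < n"
    have "(\<Sum>j<n. adj_mat n (H'_edges r) $$ (i,j) * x j) = (\<Sum>j\<in>{j\<in>{..<n}. H'_edges r i j}. x j)"
      by (rule adj_row[OF i])
    also have "\<dots> < L * x i"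
    proof -
      consider "i = 0" | "1 \<le> i \<and> i \<le> 3*r" | "3*r+1 \<le> i \<and> i \<le> 3*r+3" | "3*r+4 \<le> i" by linarith
      then show ?thesis
      proof cases
        case 1
        have s1: "(\<Sum>j\<in>{1..3*r}. x j) = (\<Sum>j\<in>{1..3*r}. a)" by (rule sum.cong) (auto simp: x_def)
        have s2: "(\<Sum>j\<in>{3*r+1..3*r+3}. x j) = (\<Sum>j\<in>{3*r+1..3*r+3}. c)" by (rule sum.cong) (auto simp: x_def)
        have "(\<Sum>j\<in>{j\<in>{..<n}. H'_edges r 0 j}. x j) = (\<Sum>j\<in>{1..3*r}. x j) + (\<Sum>j\<in>{3*r+1..3*r+3}. x j)"
          unfolding S0[OF n] by (rule sum.union_disjoint) auto
        also have "\<dots> = 3*r*a + 3*c" unfolding s1 s2 by simp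
        finally show ?thesis using 1 ar(2) unfolding a_def c_def x_def by simp
      next
        case 2
        define q where "q = (i-1) div 3"
        define T where "T = {3*q+1, 3*q+2, 3*q+3}"
        have q: "3*q+1 \<le> i" "i \<le> 3*q+3" using divq[of i q] 2 unfolding q_def by auto
        have "3*q < 3*r" using q 2 by linarith
        hence "q < r" by simp
        hence qr: "3*q+3 \<le> 3*r" by simp
        have iT: "i \<in> T" using q unfolding T_def by auto
        have cT: "card T = 3" unfolding T_def by simp
        have cT2: "card (T - {i}) = 2" using iT cT by (simp add: card_Diff_singleton)
        have s1: "(\<Sum>j\<in>T-{i}. x j) = (\<Sum>j\<in>T-{i}. a)" 
          by (rule sum.cong) (use qr in \<open>auto simp: x_def T_def\<close>)
        have "(\<Sum>j\<in>{j\<in>{..<n}. H'_edges r i j}. x j) = x 0 + (\<Sum>j\<in>T-{i}. x j)"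
          unfolding S1[OF n conjunct1[OF 2] conjunct2[OF 2]] q_def[symmetric] T_def[symmetric]
          by (subst sum.insert) (auto simp: T_def)
        also have "\<dots> = 1 + 2*a" unfolding s1 using cT2 by (simp add: x_def)
        finally show ?thesis using 2 ar(3) unfolding a_def x_def by simp
      next
        case 3
        have s1: "(\<Sum>j\<in>{3*r+4..<n}. x j) = (\<Sum>j\<in>{3*r+4..<n}. d)" by (rule sum.cong) (auto simp: x_def)
        have cd: "real (card {3*r+4..<n}) = m - 1" unfolding m_def using n by (simp add: of_nat_diff)
        have "(\<Sum>j\<in>{j\<in>{..<n}. H'_edges r i j}. x j) = x 0 + (\<Sum>j\<in>{3*r+4..<n}. x j)"
          unfolding S2[OF n conjunct1[OF 3] conjunct2[OF 3]] by (subst sum.insert) auto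
        also have "\<dots> = 1 + (m-1)*d" unfolding s1 using cd by (simp add: x_def)
        finally show ?thesis using 3 ar(4) unfolding d_def c_def x_def by simp
      next
        case 4
        have s1: "(\<Sum>j\<in>{3*r+1..3*r+3}. x j) = (\<Sum>j\<in>{3*r+1..3*r+3}. c)" by (rule sum.cong) (auto simp: x_def)
        have "(\<Sum>j\<in>{j\<in>{..<n}. H'_edges r i j}. x j) = 3*c" unfolding S3[OF n 4 i] s1 by simp
        thus ?thesis using 4 ar(5) unfolding d_def c_def x_def by simp
      qed
    qed
    finally show "(\<Sum>j<n. adj_mat n (H'_edges r) $$ (i,j) * x j) < L * x i" .
  qed
qed


lemma H_zero: assumes n: "n \<ge> 3*r+6"
  shows "eigenvalue (adj_mat n (H'_edges r)) 0"
proof -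
  define p where "p = 3*r+4"
  define xk where "xk j = (if j = p then 1 else if j = p+1 then -1 else (0::real))" for j :: nat
  define v where "v = vec n xk"
  have A: "adj_mat n (H'_edges r) \<in> carrier_mat n n" by (rule adj_carrier)
  have vc: "v \<in> carrier_vec n" unfolding v_def by simp
  have pn: "p < n" "p+1 < n" using n unfolding p_def by auto
  have "v $ p = 1" unfolding v_def xk_def using pn by simp
  moreover have "(0\<^sub>v n :: real vec) $ p = 0" using pn by simp
  ultimately have vnz: "v \<noteq> 0\<^sub>v n" by auto
  have HH: "H'_edges r i p = H'_edges r i (p+1)" for i unfolding H'_edges_def p_def by auto
  have "adj_mat n (H'_edges r) *\<^sub>v v = 0 \<cdot>\<^sub>v v"
  proof (rule eq_vecI)
    fix i assume i: "i < dim_vec (0 \<cdot>\<^sub>v v)"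
    hence i: "i < n" using vc by simp
    let ?B = "adj_mat n (H'_edges r)"
    have "(?B *\<^sub>v v) $ i = (\<Sum>j<n. (if j = p then ?B $$ (i,p) else 0) + (if j = p+1 then - ?B $$ (i,p+1) else 0))"
      unfolding mult_row[OF A vc i] by (rule sum.cong) (auto simp: v_def xk_def)
    also have "\<dots> = ?B $$ (i,p) - ?B $$ (i,p+1)" using pn by (simp add: sum.distrib)
    also have "\<dots> = 0" using i pn HH[of i] by (simp add: adj_mat_def)
    also have "\<dots> = (0 \<cdot>\<^sub>v v) $ i" using i vc by simp
    finally show "(?B *\<^sub>v v) $ i = (0 \<cdot>\<^sub>v v) $ i" .
  qed (use A vc in simp)
  thus ?thesis unfolding eigenvalue_def eigenvector_def using vc vnz A by auto
qed

theorem corollary4p4: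
  fixes r n :: nat
  assumes "r \<ge> 1" and "n \<ge> 3*r+6"
  shows "spec_rad n K3_edges > spec_rad n (H'_edges r)"
proof -
  define L where "L = sqrt (3*(real n - 3))"
  let ?S = "{k. eigenvalue (adj_mat n (H'_edges r)) k}"
  let ?K = "{k. eigenvalue (adj_mat n K3_edges) k}"
  have fS: "finite ?S" using card_finite_spectrum(1)[OF adj_carrier] unfolding spectrum_def .
  have fK: "finite ?K" using card_finite_spectrum(1)[OF adj_carrier] unfolding spectrum_def .
  have "0 \<in> ?S" using H_zero[OF assms(2)] by simp
  hence "Max ?S \<in> ?S" using fS by (intro Max_in) auto
  hence "spec_rad n (H'_edges r) < L" unfolding spec_rad_def L_def using H_bound[OF assms] by simp
  moreover have "L \<in> ?K" using K3_eig[of n] assms unfolding L_def by simp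
  hence "L \<le> spec_rad n K3_edges" unfolding spec_rad_def using fK by simp
  ultimately show ?thesis by simp
qed

end
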